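(* Let $m,n,d,e$ be positive integers with $m=2n$ and $e=\gcd(n,d)=\gcd(m,d)$, and let $s\ge0$ and $u\ge1$ be integers. If $H$ is an $\mathbb{F}_{2^e}$-subspace of $\mathbb{F}_{2^e}^u$ of dimension $i$, then \[|W_{s,u,H}|=2^{mi}\,|V_{s,u-i}|.\]
   Context: For integers $s\ge0$ and $u\ge1$, $V_{s,u}$ denotes the set of solutions $(x_1,\dots,x_{2u})\in\mathbb{F}_{2^m}^{2u}$ of the system \[\sum_{i=1}^u\big(x_{2i-1}x_{2i}^{2^{(\frac{n}{e}-j)d}}+x_{2i-1}^{2^{(\frac{n}{e}-j)d}}x_{2i}\big)=0,\qquad j=0,1,\dots,s.\] By convention $|V_{s,0}|=1$. For $\vec x=(x_1,\dots,x_{2u})\in V_{s,u}$ let $Z(\vec x)=\{(c_1,\dots,c_u)\in\mathbb{F}_{2^e}^u\mid \sum_{i=1}^u c_ix_{2i}=0\}$. For a subspace $H\subseteq\mathbb{F}_{2^e}^u$ let $W_{s,u,H}=\{\vec x\in V_{s,u}\mid Z(\vec x)\supseteq H\}$. *)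

theory Defs
  imports Main "HOL-Library.FuncSet"
begin

text \<open>The field F_{2^m} is modelled by a finite field type 'a of characteristic 2 with
  2^m elements (stated in the theorem).  Vectors in F^k are extensional functions on
  the index set {1..k}.\<close>

text \<open>Frobenius power x^(2^k) for an integer k; since x^(2^m) = x in F_{2^m} this only
  depends on k mod m (this also covers negative exponents n/e - j < 0).\<close>
definition frob :: "nat \<Rightarrow> int \<Rightarrow> 'a::field \<Rightarrow> 'a" where
  "frob m k x = x ^ (2 ^ nat (k mod int m))"

definition subfld :: "nat \<Rightarrow> 'a::field set" where
  "subfld e = {c. c ^ (2 ^ e) = c}"

definition Vset :: "nat \<Rightarrow> nat \<Rightarrow> nat \<Rightarrow> nat \<Rightarrow> nat \<Rightarrow> nat \<Rightarrow> (nat \<Rightarrow> 'a::field) set" where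
  "Vset m n d e s u =
     {x \<in> PiE {1..2*u} (\<lambda>_. UNIV).
        \<forall>j\<le>s. (\<Sum>i=1..u.
                   x (2*i-1) * frob m ((int (n div e) - int j) * int d) (x (2*i))
                 + frob m ((int (n div e) - int j) * int d) (x (2*i-1)) * x (2*i)) = 0}"

definition Zset :: "nat \<Rightarrow> nat \<Rightarrow> (nat \<Rightarrow> 'a::field) \<Rightarrow> (nat \<Rightarrow> 'a) set" where
  "Zset e u x = {c \<in> PiE {1..u} (\<lambda>_. subfld e). (\<Sum>i=1..u. c i * x (2*i)) = 0}"

definition Wset :: "nat \<Rightarrow> nat \<Rightarrow> nat \<Rightarrow> nat \<Rightarrow> nat \<Rightarrow> nat \<Rightarrow> (nat \<Rightarrow> 'a::field) set
                     \<Rightarrow> (nat \<Rightarrow> 'a) set" where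
  "Wset m n d e s u H = {x \<in> Vset m n d e s u. H \<subseteq> Zset e u x}"

definition is_subspace :: "nat \<Rightarrow> nat \<Rightarrow> (nat \<Rightarrow> 'a::field) set \<Rightarrow> bool" where
  "is_subspace e u H \<longleftrightarrow>
     H \<subseteq> PiE {1..u} (\<lambda>_. subfld e) \<and>
     (\<lambda>t\<in>{1..u}. 0) \<in> H \<and>
     (\<forall>v\<in>H. \<forall>w\<in>H. (\<lambda>t\<in>{1..u}. v t + w t) \<in> H) \<and>
     (\<forall>c\<in>subfld e. \<forall>v\<in>H. (\<lambda>t\<in>{1..u}. c * v t) \<in> H)"

definition has_dim :: "nat \<Rightarrow> nat \<Rightarrow> (nat \<Rightarrow> 'a::field) set \<Rightarrow> nat \<Rightarrow> bool" where
  "has_dim e u H i \<longleftrightarrow>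
     (\<exists>b :: nat \<Rightarrow> nat \<Rightarrow> 'a.
        (\<forall>l<i. b l \<in> H) \<and>
        (\<forall>a. (\<forall>l<i. a l \<in> subfld e) \<longrightarrow>
             (\<forall>t\<in>{1..u}. (\<Sum>l<i. a l * b l t) = 0) \<longrightarrow> (\<forall>l<i. a l = 0)) \<and>
        (\<forall>h\<in>H. \<exists>a. (\<forall>l<i. a l \<in> subfld e) \<and>
             (\<forall>t\<in>{1..u}. h t = (\<Sum>l<i. a l * b l t))))"

end

theory Submission
  imports Defs
begin

definition hom_fix :: "('a::field \<Rightarrow> 'a) \<Rightarrow> 'a set \<Rightarrow> bool" where
  "hom_fix f K \<longleftrightarrow> (\<forall>x y. f (x + y) = f x + f y) \<and> (\<forall>x y. f (x * y) = f x * f y) \<and> (\<forall>c\<in>K. f c = c)"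

definition subf :: "'a::field set \<Rightarrow> bool" where
  "subf K \<longleftrightarrow> 0 \<in> K \<and> 1 \<in> K \<and> (\<forall>x\<in>K. \<forall>y\<in>K. x + y \<in> K \<and> x - y \<in> K \<and> x * y \<in> K \<and> x / y \<in> K)"

definition Vg :: "(nat \<Rightarrow> 'a::field \<Rightarrow> 'a) \<Rightarrow> nat \<Rightarrow> nat set \<Rightarrow> ((nat \<Rightarrow> 'a) \<times> (nat \<Rightarrow> 'a)) set" where
  "Vg ph s I = {(a,b). a \<in> PiE I (\<lambda>_. UNIV) \<and> b \<in> PiE I (\<lambda>_. UNIV) \<and>
      (\<forall>j\<le>s. (\<Sum>t\<in>I. a t * ph j (b t) + ph j (a t) * b t) = 0)}"

definition Wg :: "(nat \<Rightarrow> 'a::field \<Rightarrow> 'a) \<Rightarrow> nat \<Rightarrow> nat set \<Rightarrow> (nat \<Rightarrow> nat \<Rightarrow> 'a) \<Rightarrow> nat \<Rightarrow> ((nat \<Rightarrow> 'a) \<times> (nat \<Rightarrow> 'a)) set" where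
  "Wg ph s I B i = {p \<in> Vg ph s I. \<forall>l<i. (\<Sum>t\<in>I. B l t * snd p t) = 0}"

lemma hom_fix_props:
  assumes "hom_fix f K"
  shows "f 0 = 0" "f (- x) = - f x" "f (x - y) = f x - f y" "f (sum g A) = (\<Sum>a\<in>A. f (g a))"
proof -
  have add: "\<And>x y. f (x + y) = f x + f y" using assms by (simp add: hom_fix_def)
  have "f 0 = f (0 + 0)" by simp
  then show z: "f 0 = 0" using add by (metis add_cancel_left_right)
  have n: "f (- w) = - f w" for w
  proof -
    have "f (- w) + f w = 0" using add[of "-w" w] z by simp
    then show ?thesis by (simp add: add_eq_0_iff2)
  qed
  show "f (- x) = - f x" by (rule n)
  show "f (x - y) = f x - f y" using add[of x "-y"] n[of y] by simp
  show "f (sum g A) = (\<Sum>a\<in>A. f (g a))"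
    by (induct A rule: infinite_finite_induct) (simp_all add: z add)
qed

lemma form_identity:
  fixes a b g :: "nat \<Rightarrow> 'a::field"
  assumes f: "hom_fix f K" and fin: "finite I" and t0: "t0 \<in> I"
    and gK: "\<forall>t\<in>I. g t \<in> K"
    and bt0: "b t0 = - (\<Sum>t\<in>I-{t0}. g t * b t)"
  shows "(\<Sum>t\<in>I. a t * f (b t) + f (a t) * b t)
       = (\<Sum>t\<in>I-{t0}. (a t - g t * a t0) * f (b t) + f (a t - g t * a t0) * b t)"
proof -
  have mul: "\<And>x y. f (x * y) = f x * f y" and fx: "\<And>c. c \<in> K \<Longrightarrow> f c = c"
    using f by (auto simp: hom_fix_def)
  note P = hom_fix_props[OF f]
  have fb: "f (b t0) = - (\<Sum>t\<in>I-{t0}. g t * f (b t))"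
    using gK by (simp add: bt0 P mul fx)
  have "(\<Sum>t\<in>I. a t * f (b t) + f (a t) * b t) =
     a t0 * f (b t0) + f (a t0) * b t0 + (\<Sum>t\<in>I-{t0}. a t * f (b t) + f (a t) * b t)"
    using fin t0 by (simp add: sum.remove)
  also have "\<dots> = (\<Sum>t\<in>I-{t0}. (a t * f (b t) + f (a t) * b t) - a t0 * (g t * f (b t)) - f (a t0) * (g t * b t))"
    apply (subst fb, subst bt0)
    using fin by (simp add: sum_subtractf sum_distrib_left sum_negf sum.distrib algebra_simps)
  also have "\<dots> = (\<Sum>t\<in>I-{t0}. (a t - g t * a t0) * f (b t) + f (a t - g t * a t0) * b t)"
    apply (rule sum.cong, simp)
    using gK by (simp add: P mul fx algebra_simps)
  finally show ?thesis .
qed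

lemma constr_identity:
  fixes b :: "nat \<Rightarrow> 'a::field"
  assumes fin: "finite I" and t0: "t0 \<in> I"
    and bt0: "b t0 = - (\<Sum>t\<in>I-{t0}. g t * b t)"
  shows "(\<Sum>t\<in>I. c t * b t) = (\<Sum>t\<in>I-{t0}. (c t - c t0 * g t) * b t)"
proof -
  have "(\<Sum>t\<in>I. c t * b t) = c t0 * b t0 + (\<Sum>t\<in>I-{t0}. c t * b t)"
    using fin t0 by (simp add: sum.remove)
  also have "\<dots> = (\<Sum>t\<in>I-{t0}. (c t - c t0 * g t) * b t)"
    by (simp add: bt0 sum_distrib_left sum_subtractf algebra_simps)
  finally show ?thesis .
qed

lemma last_constr:
  fixes b :: "nat \<Rightarrow> 'a::field"
  assumes fin: "finite I" and t0: "t0 \<in> I" and v0: "v t0 \<noteq> 0" and g0: "g t0 = 1"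
    and vg: "\<forall>t\<in>I. v t = v t0 * g t"
  shows "(\<Sum>t\<in>I. v t * b t) = 0 \<longleftrightarrow> b t0 = - (\<Sum>t\<in>I-{t0}. g t * b t)"
proof -
  have "(\<Sum>t\<in>I. v t * b t) = v t0 * (\<Sum>t\<in>I. g t * b t)"
    using vg by (simp add: sum_distrib_left mult.assoc)
  also have "(\<Sum>t\<in>I. g t * b t) = b t0 + (\<Sum>t\<in>I-{t0}. g t * b t)"
    using fin t0 g0 by (simp add: sum.remove)
  finally show ?thesis using v0 by (simp add: eq_neg_iff_add_eq_0)
qed

lemma step_bij:
  fixes ph :: "nat \<Rightarrow> 'a::field \<Rightarrow> 'a"
  assumes hf: "\<forall>j. hom_fix (ph j) K"
    and fin: "finite I" and t0: "t0 \<in> I" and gK: "\<forall>t\<in>I. g t \<in> K" and g0: "g t0 = 1"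
    and v0: "B i t0 \<noteq> 0" and vg: "\<forall>t\<in>I. B i t = B i t0 * g t"
    and B'def: "B' = (\<lambda>l t. B l t - B l t0 * g t)"
  shows "bij_betw (\<lambda>(a,b). (a t0, (restrict (\<lambda>t. a t - g t * a t0) (I-{t0}), restrict b (I-{t0}))))
           (Wg ph s I B (Suc i)) ((UNIV::'a set) \<times> Wg ph s (I-{t0}) B' i)"
proof -
  let ?I' = "I-{t0}"
  define F where "F = (\<lambda>(a::nat\<Rightarrow>'a,b::nat\<Rightarrow>'a). (a t0, (restrict (\<lambda>t. a t - g t * a t0) ?I', restrict b ?I')))"
  define G where "G = (\<lambda>(z::'a,(a'::nat\<Rightarrow>'a,b'::nat\<Rightarrow>'a)).
     ((\<lambda>t. if t \<in> ?I' then a' t + g t * z else if t = t0 then z else undefined),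
      (\<lambda>t. if t \<in> ?I' then b' t else if t = t0 then - (\<Sum>t\<in>?I'. g t * b' t) else undefined)))"
  have finI': "finite ?I'" using fin by simp
  have W: "(a,b) \<in> Wg ph s I B (Suc i) \<longleftrightarrow> a \<in> PiE I (\<lambda>_. UNIV) \<and> b \<in> PiE I (\<lambda>_. UNIV) \<and>
      (\<forall>j\<le>s. (\<Sum>t\<in>I. a t * ph j (b t) + ph j (a t) * b t) = 0) \<and>
      (\<forall>l<Suc i. (\<Sum>t\<in>I. B l t * b t) = 0)" for a b
    by (simp add: Wg_def Vg_def)
  have W': "(a,b) \<in> Wg ph s ?I' B' i \<longleftrightarrow> a \<in> PiE ?I' (\<lambda>_. UNIV) \<and> b \<in> PiE ?I' (\<lambda>_. UNIV) \<and>
      (\<forall>j\<le>s. (\<Sum>t\<in>?I'. a t * ph j (b t) + ph j (a t) * b t) = 0) \<and>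
      (\<forall>l<i. (\<Sum>t\<in>?I'. B' l t * b t) = 0)" for a b
    by (simp add: Wg_def Vg_def)
  have lc: "(\<Sum>t\<in>I. B i t * b t) = 0 \<longleftrightarrow> b t0 = - (\<Sum>t\<in>?I'. g t * b t)" for b :: "nat \<Rightarrow> 'a"
    by (rule last_constr[OF fin t0 v0 g0 vg])
  have Bsplit: "(\<forall>l<Suc i. (\<Sum>t\<in>I. B l t * b t) = 0) \<longleftrightarrow>
        b t0 = - (\<Sum>t\<in>?I'. g t * b t) \<and> (\<forall>l<i. (\<Sum>t\<in>?I'. B' l t * b t) = 0)" for b :: "nat \<Rightarrow> 'a"
  proof
    assume A: "\<forall>l<Suc i. (\<Sum>t\<in>I. B l t * b t) = 0"
    then have bt0: "b t0 = - (\<Sum>t\<in>?I'. g t * b t)" using lc by auto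
    show "b t0 = - (\<Sum>t\<in>?I'. g t * b t) \<and> (\<forall>l<i. (\<Sum>t\<in>?I'. B' l t * b t) = 0)"
      using bt0 A constr_identity[OF fin t0 bt0] by (auto simp add: B'def)
  next
    assume A: "b t0 = - (\<Sum>t\<in>?I'. g t * b t) \<and> (\<forall>l<i. (\<Sum>t\<in>?I'. B' l t * b t) = 0)"
    then have bt0: "b t0 = - (\<Sum>t\<in>?I'. g t * b t)" by auto
    show "\<forall>l<Suc i. (\<Sum>t\<in>I. B l t * b t) = 0"
    proof (intro allI impI)
      fix l assume "l < Suc i"
      then consider "l < i" | "l = i" by linarith
      then show "(\<Sum>t\<in>I. B l t * b t) = 0"
      proof cases
        case 1 then show ?thesis using A constr_identity[OF fin t0 bt0, of "B l"] by (simp add: B'def)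
      next
        case 2 then show ?thesis using lc bt0 by simp
      qed
    qed
  qed
  have form: "(\<Sum>t\<in>I. a t * ph j (b t) + ph j (a t) * b t)
       = (\<Sum>t\<in>?I'. (a t - g t * a t0) * ph j (b t) + ph j (a t - g t * a t0) * b t)"
    if "b t0 = - (\<Sum>t\<in>?I'. g t * b t)" for a b :: "nat \<Rightarrow> 'a" and j
    using form_identity[of "ph j" K I t0 g b a] hf fin t0 gK that by blast
  show ?thesis unfolding F_def[symmetric]
  proof (rule bij_betw_byWitness[where f'=G])
    show "\<forall>p\<in>Wg ph s I B (Suc i). G (F p) = p"
    proof
      fix p assume "p \<in> Wg ph s I B (Suc i)"
      moreover obtain a b where p: "p = (a,b)" by (cases p)
      ultimately have a: "a \<in> PiE I (\<lambda>_. UNIV)" and b: "b \<in> PiE I (\<lambda>_. UNIV)"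
        and bt0: "b t0 = - (\<Sum>t\<in>?I'. g t * b t)"
        using W Bsplit by auto
      have "(\<Sum>t\<in>?I'. g t * restrict b ?I' t) = (\<Sum>t\<in>?I'. g t * b t)"
        by (rule sum.cong) auto
      then show "G (F p) = p" unfolding p F_def G_def
        using a b bt0 by (auto simp: PiE_def extensional_def fun_eq_iff)
    qed
  next
    show "\<forall>q\<in>UNIV \<times> Wg ph s ?I' B' i. F (G q) = q"
    proof
      fix q assume "q \<in> (UNIV::'a set) \<times> Wg ph s ?I' B' i"
      moreover obtain z a b where q: "q = (z,(a,b))" by (cases q) auto
      ultimately have a: "a \<in> PiE ?I' (\<lambda>_. UNIV)" and b: "b \<in> PiE ?I' (\<lambda>_. UNIV)"
        using W' by auto
      show "F (G q) = q" unfolding q F_def G_def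
        using a b by (auto simp: PiE_def extensional_def fun_eq_iff)
    qed
  next
    show "F ` Wg ph s I B (Suc i) \<subseteq> (UNIV::'a set) \<times> Wg ph s ?I' B' i"
    proof
      fix q assume "q \<in> F ` Wg ph s I B (Suc i)"
      then obtain a b where ab: "(a,b) \<in> Wg ph s I B (Suc i)" and q: "q = F (a,b)" by auto
      have a: "a \<in> PiE I (\<lambda>_. UNIV)" and b: "b \<in> PiE I (\<lambda>_. UNIV)"
        and fm: "\<forall>j\<le>s. (\<Sum>t\<in>I. a t * ph j (b t) + ph j (a t) * b t) = 0"
        and bt0: "b t0 = - (\<Sum>t\<in>?I'. g t * b t)"
        and cs: "\<forall>l<i. (\<Sum>t\<in>?I'. B' l t * b t) = 0"
        using ab W Bsplit by auto
      let ?a = "restrict (\<lambda>t. a t - g t * a t0) ?I'" and ?b = "restrict b ?I'"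
      have "(\<Sum>t\<in>?I'. ?a t * ph j (?b t) + ph j (?a t) * ?b t) = 0" if "j \<le> s" for j
      proof -
        have "(\<Sum>t\<in>?I'. ?a t * ph j (?b t) + ph j (?a t) * ?b t) =
          (\<Sum>t\<in>?I'. (a t - g t * a t0) * ph j (b t) + ph j (a t - g t * a t0) * b t)"
          by (rule sum.cong) auto
        also have "\<dots> = 0" using form[OF bt0, of a j] fm that by simp
        finally show ?thesis .
      qed
      moreover have "(\<Sum>t\<in>?I'. B' l t * ?b t) = 0" if "l < i" for l
      proof -
        have "(\<Sum>t\<in>?I'. B' l t * ?b t) = (\<Sum>t\<in>?I'. B' l t * b t)"
          by (rule sum.cong) auto
        then show ?thesis using cs that by simp
      qed
      ultimately show "q \<in> (UNIV::'a set) \<times> Wg ph s ?I' B' i"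
        unfolding q F_def using W' by auto
    qed
  next
    show "G ` ((UNIV::'a set) \<times> Wg ph s ?I' B' i) \<subseteq> Wg ph s I B (Suc i)"
    proof
      fix p assume "p \<in> G ` ((UNIV::'a set) \<times> Wg ph s ?I' B' i)"
      then obtain z a' b' where ab: "(a',b') \<in> Wg ph s ?I' B' i" and p: "p = G (z,(a',b'))" by auto
      have fm: "\<forall>j\<le>s. (\<Sum>t\<in>?I'. a' t * ph j (b' t) + ph j (a' t) * b' t) = 0"
        and cs: "\<forall>l<i. (\<Sum>t\<in>?I'. B' l t * b' t) = 0"
        using ab W' by auto
      define a where "a = (\<lambda>t. if t \<in> ?I' then a' t + g t * z else if t = t0 then z else undefined)"
      define b where "b = (\<lambda>t. if t \<in> ?I' then b' t else if t = t0 then - (\<Sum>t\<in>?I'. g t * b' t) else undefined)"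
      have p': "p = (a,b)" unfolding p G_def a_def b_def by simp
      have a: "a \<in> PiE I (\<lambda>_. UNIV)" and b: "b \<in> PiE I (\<lambda>_. UNIV)"
        unfolding a_def b_def using t0 by (auto simp: PiE_def extensional_def)
      have sb: "(\<Sum>t\<in>?I'. g t * b t) = (\<Sum>t\<in>?I'. g t * b' t)"
        by (rule sum.cong) (auto simp: b_def)
      have bt0: "b t0 = - (\<Sum>t\<in>?I'. g t * b t)" unfolding sb by (simp add: b_def)
      have "(\<Sum>t\<in>I. a t * ph j (b t) + ph j (a t) * b t) = 0" if "j \<le> s" for j
      proof -
        have "(\<Sum>t\<in>I. a t * ph j (b t) + ph j (a t) * b t) =
          (\<Sum>t\<in>?I'. (a t - g t * a t0) * ph j (b t) + ph j (a t - g t * a t0) * b t)"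
          by (rule form[OF bt0])
        also have "\<dots> = (\<Sum>t\<in>?I'. a' t * ph j (b' t) + ph j (a' t) * b' t)"
          by (rule sum.cong) (auto simp: a_def b_def)
        finally show ?thesis using fm that by simp
      qed
      moreover have "(\<Sum>t\<in>?I'. B' l t * b t) = 0" if "l < i" for l
      proof -
        have "(\<Sum>t\<in>?I'. B' l t * b t) = (\<Sum>t\<in>?I'. B' l t * b' t)"
          by (rule sum.cong) (auto simp: b_def)
        then show ?thesis using cs that by simp
      qed
      ultimately show "p \<in> Wg ph s I B (Suc i)"
        unfolding p' using W Bsplit a b bt0 by auto
    qed
  qed
qed

lemma finite_Vg: "finite I \<Longrightarrow> finite (Vg ph s I :: ((nat \<Rightarrow> 'a::{field,finite}) \<times> _) set)"
proof -
  assume "finite I"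
  then have "finite (PiE I (\<lambda>_. UNIV :: 'a set) \<times> PiE I (\<lambda>_. UNIV :: 'a set))"
    by (simp add: finite_PiE)
  moreover have "Vg ph s I \<subseteq> PiE I (\<lambda>_. UNIV :: 'a set) \<times> PiE I (\<lambda>_. UNIV :: 'a set)"
    by (auto simp: Vg_def)
  ultimately show ?thesis by (rule finite_subset[rotated])
qed

lemma finite_Wg: "finite I \<Longrightarrow> finite (Wg ph s I B i :: ((nat \<Rightarrow> 'a::{field,finite}) \<times> _) set)"
  by (rule finite_subset[OF _ finite_Vg[of I ph s]]) (auto simp: Wg_def)

lemma card_Vg_le:
  fixes ph :: "nat \<Rightarrow> 'a::{field,finite} \<Rightarrow> 'a"
  assumes fI: "finite I" and fJ: "finite J" and h: "bij_betw h J I"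
  shows "card (Vg ph s I) \<le> card (Vg ph s J)"
proof -
  define M where "M = (\<lambda>(a::nat\<Rightarrow>'a,b::nat\<Rightarrow>'a). (restrict (a \<circ> h) J, restrict (b \<circ> h) J))"
  have hI: "\<And>y. y \<in> J \<Longrightarrow> h y \<in> I" using h by (auto simp: bij_betw_def)
  have surjh: "\<And>x. x \<in> I \<Longrightarrow> \<exists>y\<in>J. x = h y" using h by (auto simp: bij_betw_def)
  have sr: "(\<Sum>t\<in>I. F t) = (\<Sum>y\<in>J. F (h y))" for F :: "nat \<Rightarrow> 'a"
    using sum.reindex_bij_betw[OF h, of F] by simp
  have "inj_on M (Vg ph s I)"
  proof (rule inj_onI)
    fix p q assume p: "p \<in> Vg ph s I" and q: "q \<in> Vg ph s I" and e: "M p = M q"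
    obtain a b where pp: "p = (a,b)" by (cases p)
    obtain a' b' where qq: "q = (a',b')" by (cases q)
    have ex: "a \<in> PiE I (\<lambda>_. UNIV)" "b \<in> PiE I (\<lambda>_. UNIV)" "a' \<in> PiE I (\<lambda>_. UNIV)" "b' \<in> PiE I (\<lambda>_. UNIV)"
      using p q by (auto simp: pp qq Vg_def)
    have e1: "\<forall>y\<in>J. a (h y) = a' (h y) \<and> b (h y) = b' (h y)"
      using e by (auto simp: M_def pp qq fun_eq_iff restrict_def split: if_splits)
    have "a = a'" "b = b'"
      using ex e1 surjh by (auto simp: fun_eq_iff PiE_def extensional_def) (metis+)
    then show "p = q" by (simp add: pp qq)
  qed
  moreover have "M ` Vg ph s I \<subseteq> Vg ph s J"
  proof
    fix q assume "q \<in> M ` Vg ph s I"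
    then obtain a b where ab: "(a,b) \<in> Vg ph s I" and q: "q = M (a,b)" by auto
    have "\<forall>j\<le>s. (\<Sum>t\<in>I. a t * ph j (b t) + ph j (a t) * b t) = 0" using ab by (simp add: Vg_def)
    then have "\<forall>j\<le>s. (\<Sum>y\<in>J. restrict (a \<circ> h) J y * ph j (restrict (b \<circ> h) J y)
          + ph j (restrict (a \<circ> h) J y) * restrict (b \<circ> h) J y) = 0"
      by (simp add: sr)
    then show "q \<in> Vg ph s J" unfolding q M_def Vg_def by auto
  qed
  ultimately show ?thesis using card_inj_on_le finite_Vg[OF fJ] by blast
qed

lemma card_Vg_eq:
  fixes ph :: "nat \<Rightarrow> 'a::{field,finite} \<Rightarrow> 'a"
  assumes fI: "finite I" and fJ: "finite J" and c: "card I = card J"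
  shows "card (Vg ph s I) = card (Vg ph s J)"
proof -
  obtain h where h: "bij_betw h J I" using finite_same_card_bij[OF fJ fI] c by auto
  have h': "bij_betw (inv_into J h) I J" using bij_betw_inv_into[OF h] .
  show ?thesis using card_Vg_le[OF fI fJ h, of ph s] card_Vg_le[OF fJ fI h', of ph s] by simp
qed

lemma main_count:
  fixes ph :: "nat \<Rightarrow> 'a::{field,finite} \<Rightarrow> 'a"
  assumes hf: "\<forall>j. hom_fix (ph j) K" and sK: "subf K"
  shows "finite I \<Longrightarrow> (\<forall>l<i. \<forall>t\<in>I. B l t \<in> K) \<Longrightarrow>
    (\<forall>c. (\<forall>l<i. c l \<in> K) \<longrightarrow> (\<forall>t\<in>I. (\<Sum>l<i. c l * B l t) = 0) \<longrightarrow> (\<forall>l<i. c l = 0)) \<Longrightarrow>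
    card (Wg ph s I B i) = card (UNIV::'a set) ^ i * card (Vg ph s {1..card I - i})"
proof (induction i arbitrary: I B)
  case 0
  have "Wg ph s I B 0 = Vg ph s I" by (simp add: Wg_def)
  then show ?case using card_Vg_eq[of I "{1..card I}" ph s] 0 by simp
next
  case (Suc i)
  note fin = Suc.prems(1) and BK = Suc.prems(2) and ind = Suc.prems(3)
  have K0: "0 \<in> K" and K1: "1 \<in> K" and Kops: "\<And>x y. x \<in> K \<Longrightarrow> y \<in> K \<Longrightarrow> x + y \<in> K \<and> x - y \<in> K \<and> x * y \<in> K \<and> x / y \<in> K"
    using sK by (auto simp: subf_def)
  have "\<exists>t0\<in>I. B i t0 \<noteq> 0"
  proof (rule ccontr)
    assume "\<not> ?thesis"
    then have z: "\<forall>t\<in>I. B i t = 0" by auto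
    define c where "c = (\<lambda>l. if l = i then (1::'a) else 0)"
    have "\<forall>l<Suc i. c l \<in> K" using K0 K1 by (simp add: c_def)
    moreover have "\<forall>t\<in>I. (\<Sum>l<Suc i. c l * B l t) = 0"
      using z by (simp add: c_def)
    ultimately have "c i = 0" using ind by blast
    then show False by (simp add: c_def)
  qed
  then obtain t0 where t0: "t0 \<in> I" and v0: "B i t0 \<noteq> 0" by auto
  define g where "g = (\<lambda>t. B i t / B i t0)"
  define B' where "B' = (\<lambda>l t. B l t - B l t0 * g t)"
  have gK: "\<forall>t\<in>I. g t \<in> K" using BK t0 Kops by (simp add: g_def)
  have g0: "g t0 = 1" using v0 by (simp add: g_def)
  have vg: "\<forall>t\<in>I. B i t = B i t0 * g t" using v0 by (simp add: g_def)
  let ?I' = "I - {t0}"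
  have bij: "bij_betw (\<lambda>(a,b). (a t0, (restrict (\<lambda>t. a t - g t * a t0) ?I', restrict b ?I')))
           (Wg ph s I B (Suc i)) ((UNIV::'a set) \<times> Wg ph s ?I' B' i)"
    by (rule step_bij[OF hf fin t0 gK g0 v0 vg B'_def])
  have B'K: "\<forall>l<i. \<forall>t\<in>?I'. B' l t \<in> K"
    using BK gK t0 Kops by (simp add: B'_def)
  have ind': "\<forall>c. (\<forall>l<i. c l \<in> K) \<longrightarrow> (\<forall>t\<in>?I'. (\<Sum>l<i. c l * B' l t) = 0) \<longrightarrow> (\<forall>l<i. c l = 0)"
  proof (rule allI, intro impI)
    fix c assume cK: "\<forall>l<i. c l \<in> K" and cz: "\<forall>t\<in>?I'. (\<Sum>l<i. c l * B' l t) = 0"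
    define S where "S = (\<Sum>l<i. c l * B l t0)"
    define c' where "c' = (\<lambda>l. if l = i then - S / B i t0 else c l)"
    have SK: "S \<in> K"
      unfolding S_def using cK BK t0
    proof (induction i)
      case 0 then show ?case using K0 by simp
    next
      case (Suc k) then show ?case using Kops by simp
    qed
    have nS: "- S \<in> K" using Kops[OF K0 SK] by simp
    have "B i t0 \<in> K" using BK t0 by simp
    with nS Kops have dK: "- S / B i t0 \<in> K" by blast
    have c'K: "\<forall>l<Suc i. c' l \<in> K" using cK dK by (auto simp: c'_def less_Suc_eq)
    have c'z: "\<forall>t\<in>I. (\<Sum>l<Suc i. c' l * B l t) = 0"
    proof
      fix t assume tI: "t \<in> I"
      have e: "(\<Sum>l<Suc i. c' l * B l t) = (\<Sum>l<i. c l * B' l t) + (\<Sum>l<i. c l * B l t0) * g t - S / B i t0 * B i t"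
        by (simp add: c'_def B'_def sum_subtractf sum_distrib_right sum_distrib_left algebra_simps)
      show "(\<Sum>l<Suc i. c' l * B l t) = 0"
      proof (cases "t = t0")
        case True
        then show ?thesis using e v0 g0 by (simp add: S_def B'_def)
      next
        case False
        then show ?thesis using e cz tI vg v0 by (simp add: S_def)
      qed
    qed
    have A: "\<forall>l<Suc i. c' l = 0" using ind c'K c'z by blast
    show "\<forall>l<i. c l = 0"
    proof (intro allI impI)
      fix l assume l: "l < i"
      then have "c' l = 0" using A by simp
      then show "c l = 0" using l by (simp add: c'_def)
    qed
  qed
  have finI': "finite ?I'" using fin by simp
  have IH: "card (Wg ph s ?I' B' i) = card (UNIV::'a set) ^ i * card (Vg ph s {1..card ?I' - i})"
    by (rule Suc.IH[OF finI' B'K ind'])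
  have cI: "card ?I' - i = card I - Suc i" using fin t0 by simp
  have "card (Wg ph s I B (Suc i)) = card ((UNIV::'a set) \<times> Wg ph s ?I' B' i)"
    by (rule bij_betw_same_card[OF bij])
  also have "\<dots> = card (UNIV::'a set) * card (Wg ph s ?I' B' i)" by (simp add: card_cartesian_product)
  finally show ?case using IH cI by simp
qed

lemma card_transfer:
  fixes R :: "(nat \<Rightarrow> 'a) \<Rightarrow> (nat \<Rightarrow> 'a) \<Rightarrow> bool"
  shows "card {x \<in> PiE {1..2*u} (\<lambda>_. UNIV). R (\<lambda>t\<in>{1..u}. x (2*t-1)) (\<lambda>t\<in>{1..u}. x (2*t))}
       = card {(a,b). a \<in> PiE {1..u} (\<lambda>_. UNIV) \<and> b \<in> PiE {1..u} (\<lambda>_. UNIV) \<and> R a b}"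
proof (rule bij_betw_same_card)
  define P where "P = (\<lambda>x::nat\<Rightarrow>'a. ((\<lambda>t\<in>{1..u}. x (2*t-1)), (\<lambda>t\<in>{1..u}. x (2*t))))"
  define Q where "Q = (\<lambda>(a::nat\<Rightarrow>'a,b::nat\<Rightarrow>'a) k. if k \<in> {1..2*u} then (if odd k then a ((k+1) div 2) else b (k div 2)) else undefined)"
  have k1: "(k+1) div 2 \<in> {1..u}" "2 * ((k+1) div 2) - 1 = k" if "k \<in> {1..2*u}" "odd k" for k
    using that by (auto elim!: oddE)
  have k2: "k div 2 \<in> {1..u}" "2 * (k div 2) = k" if "k \<in> {1..2*u}" "even k" for k
    using that by (auto elim!: evenE)
  have t1: "2*t-1 \<in> {1..2*u}" "odd (2*t-1)" "(2*t-1+1) div 2 = t" "2*t \<in> {1..2*u}" if "t \<in> {1..u}" for t :: nat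
    using that by auto
  show "bij_betw P {x \<in> PiE {1..2*u} (\<lambda>_. UNIV). R (\<lambda>t\<in>{1..u}. x (2*t-1)) (\<lambda>t\<in>{1..u}. x (2*t))}
       {(a,b). a \<in> PiE {1..u} (\<lambda>_. UNIV) \<and> b \<in> PiE {1..u} (\<lambda>_. UNIV) \<and> R a b}"
  proof (rule bij_betw_byWitness[where f'=Q])
    show "\<forall>x\<in>{x \<in> PiE {1..2*u} (\<lambda>_. UNIV). R (\<lambda>t\<in>{1..u}. x (2*t-1)) (\<lambda>t\<in>{1..u}. x (2*t))}. Q (P x) = x"
    proof
      fix x assume "x \<in> {x \<in> PiE {1..2*u} (\<lambda>_. UNIV). R (\<lambda>t\<in>{1..u}. x (2*t-1)) (\<lambda>t\<in>{1..u}. x (2*t))}"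
      then have x: "x \<in> PiE {1..2*u} (\<lambda>_. UNIV)" by simp
      show "Q (P x) = x"
      proof
        fix k show "Q (P x) k = x k"
          using x k1[of k] k2[of k] by (auto simp: P_def Q_def PiE_def extensional_def)
      qed
    qed
  next
    show "\<forall>p\<in>{(a,b). a \<in> PiE {1..u} (\<lambda>_. UNIV) \<and> b \<in> PiE {1..u} (\<lambda>_. UNIV) \<and> R a b}. P (Q p) = p"
    proof
      fix p assume "p \<in> {(a,b). a \<in> PiE {1..u} (\<lambda>_. UNIV) \<and> b \<in> PiE {1..u} (\<lambda>_. UNIV) \<and> R a b}"
      then obtain a b where p: "p = (a,b)" and a: "a \<in> PiE {1..u} (\<lambda>_. UNIV)" and b: "b \<in> PiE {1..u} (\<lambda>_. UNIV)" by auto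
      have "(\<lambda>t\<in>{1..u}. Q (a,b) (2*t-1)) = a"
      proof
        fix t show "(\<lambda>t\<in>{1..u}. Q (a,b) (2*t-1)) t = a t"
          using a t1[of t] by (auto simp: Q_def PiE_def extensional_def)
      qed
      moreover have "(\<lambda>t\<in>{1..u}. Q (a,b) (2*t)) = b"
      proof
        fix t show "(\<lambda>t\<in>{1..u}. Q (a,b) (2*t)) t = b t"
          using b t1[of t] by (auto simp: Q_def PiE_def extensional_def)
      qed
      ultimately show "P (Q p) = p" by (simp add: p P_def)
    qed
  next
    show "P ` {x \<in> PiE {1..2*u} (\<lambda>_. UNIV). R (\<lambda>t\<in>{1..u}. x (2*t-1)) (\<lambda>t\<in>{1..u}. x (2*t))}
       \<subseteq> {(a,b). a \<in> PiE {1..u} (\<lambda>_. UNIV) \<and> b \<in> PiE {1..u} (\<lambda>_. UNIV) \<and> R a b}"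
      by (auto simp: P_def)
  next
    show "Q ` {(a,b). a \<in> PiE {1..u} (\<lambda>_. UNIV) \<and> b \<in> PiE {1..u} (\<lambda>_. UNIV) \<and> R a b}
       \<subseteq> {x \<in> PiE {1..2*u} (\<lambda>_. UNIV). R (\<lambda>t\<in>{1..u}. x (2*t-1)) (\<lambda>t\<in>{1..u}. x (2*t))}"
    proof
      fix x assume "x \<in> Q ` {(a,b). a \<in> PiE {1..u} (\<lambda>_. UNIV) \<and> b \<in> PiE {1..u} (\<lambda>_. UNIV) \<and> R a b}"
      then obtain a b where x: "x = Q (a,b)" and a: "a \<in> PiE {1..u} (\<lambda>_. UNIV)" and b: "b \<in> PiE {1..u} (\<lambda>_. UNIV)"
        and r: "R a b" by auto
      have "(\<lambda>t\<in>{1..u}. x (2*t-1)) = a"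
      proof
        fix t show "(\<lambda>t\<in>{1..u}. x (2*t-1)) t = a t"
          using a t1[of t] by (auto simp: x Q_def PiE_def extensional_def)
      qed
      moreover have "(\<lambda>t\<in>{1..u}. x (2*t)) = b"
      proof
        fix t show "(\<lambda>t\<in>{1..u}. x (2*t)) t = b t"
          using b t1[of t] by (auto simp: x Q_def PiE_def extensional_def)
      qed
      moreover have "x \<in> PiE {1..2*u} (\<lambda>_. UNIV)"
        by (auto simp: x Q_def PiE_def extensional_def)
      ultimately show "x \<in> {x \<in> PiE {1..2*u} (\<lambda>_. UNIV). R (\<lambda>t\<in>{1..u}. x (2*t-1)) (\<lambda>t\<in>{1..u}. x (2*t))}"
        using r by simp
    qed
  qed
qed

lemma frob_add:
  assumes "CHAR('a::field) = 2"
  shows "((x::'a) + y) ^ (2 ^ k) = x ^ (2 ^ k) + y ^ (2 ^ k)"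
proof (induction k)
  case 0 then show ?case by simp
next
  case (Suc k)
  have two: "(2::'a) = 0" using assms of_nat_CHAR[where 'a='a] by simp
  have sq: "(a + b) ^ 2 = a ^ 2 + b ^ 2" for a b :: 'a
  proof -
    have "(a + b) ^ 2 = a ^ 2 + b ^ 2 + 2 * a * b" by (simp add: power2_eq_square algebra_simps)
    then show ?thesis using two by simp
  qed
  have "(x + y) ^ (2 ^ Suc k) = ((x + y) ^ (2 ^ k)) ^ 2" by (simp add: power_mult[symmetric] mult.commute)
  also have "\<dots> = (x ^ (2 ^ k)) ^ 2 + (y ^ (2 ^ k)) ^ 2" using Suc sq by simp
  also have "\<dots> = x ^ (2 ^ Suc k) + y ^ (2 ^ Suc k)" by (simp add: power_mult[symmetric] mult.commute)
  finally show ?case .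
qed

lemma fix_mult:
  assumes "(c::'a::field) ^ (2 ^ e) = c"
  shows "c ^ (2 ^ (e * r)) = c"
proof (induction r)
  case 0 then show ?case by simp
next
  case (Suc r)
  have "c ^ (2 ^ (e * Suc r)) = (c ^ (2 ^ (e * r))) ^ (2 ^ e)"
    by (simp add: power_add power_mult[symmetric] mult.commute)
  then show ?case using Suc assms by simp
qed

theorem lemma6p1:
  fixes m n d e s u i :: nat and H :: "(nat \<Rightarrow> 'a::{field,finite}) set"
  assumes "m > 0" "n > 0" "d > 0" "e > 0"
    and "m = 2 * n" and "e = gcd n d" and "e = gcd m d"
    and "CHAR('a) = 2" and "card (UNIV :: 'a set) = 2 ^ m"
    and "u \<ge> 1"
    and "is_subspace e u H" and "has_dim e u H i"
  shows "card (Wset m n d e s u H) = 2 ^ (m * i) * card (Vset m n d e s (u - i) :: (nat \<Rightarrow> 'a) set)"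
proof -
  note ch = assms(8)
  define K :: "'a set" where "K = subfld e"
  define ph :: "nat \<Rightarrow> 'a \<Rightarrow> 'a" where "ph = (\<lambda>j. frob m ((int (n div e) - int j) * int d))"
  have mc: "(x::'a) - y = x + y" for x y by (rule minus_CHAR_2[OF ch])
  have subK: "subf K"
    unfolding subf_def K_def subfld_def
    using assms(4) frob_add[OF ch]
    by (auto simp: power_mult_distrib power_divide mc)
  have edm: "e dvd m" "e dvd d" using assms(7) by auto
  have hf: "\<forall>j. hom_fix (ph j) K"
  proof
    fix j
    define k where "k = ((int (n div e) - int j) * int d) mod int m"
    have phk: "ph j = (\<lambda>x. x ^ (2 ^ nat k))" by (simp add: ph_def frob_def k_def fun_eq_iff)
    have "int e dvd k" unfolding k_def
      by (rule dvd_mod) (use edm in auto)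
    then obtain q where q: "k = int e * q" by (auto elim!: dvdE)
    have "k \<ge> 0" using assms(1) by (simp add: k_def)
    then have "q \<ge> 0" using q assms(4) by (simp add: zero_le_mult_iff)
    then have nk: "nat k = e * nat q" using q by (simp add: nat_mult_distrib)
    show "hom_fix (ph j) K"
      unfolding hom_fix_def phk
      using frob_add[OF ch] fix_mult[of _ e "nat q"]
      by (auto simp: power_mult_distrib K_def subfld_def nk)
  qed
  obtain B where Bin: "\<forall>l<i. B l \<in> H"
    and Bind: "\<forall>a. (\<forall>l<i. a l \<in> subfld e) \<longrightarrow> (\<forall>t\<in>{1..u}. (\<Sum>l<i. a l * B l t) = 0) \<longrightarrow> (\<forall>l<i. a l = 0)"
    and Bspan: "\<forall>h\<in>H. \<exists>a. (\<forall>l<i. a l \<in> subfld e) \<and> (\<forall>t\<in>{1..u}. h t = (\<Sum>l<i. a l * B l t))"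
    using assms(12) unfolding has_dim_def by blast
  have HPi: "H \<subseteq> PiE {1..u} (\<lambda>_. subfld e)" using assms(11) by (simp add: is_subspace_def)
  have BK: "\<forall>l<i. \<forall>t\<in>{1..u}. B l t \<in> K"
    using Bin HPi by (auto simp: K_def)
  define RV where "RV = (\<lambda>v (a::nat\<Rightarrow>'a) b. \<forall>j\<le>s. (\<Sum>t\<in>{1..v}. a t * ph j (b t) + ph j (a t) * b t) = 0)"
  have Vrep: "Vset m n d e s v = {x \<in> PiE {1..2*v} (\<lambda>_. UNIV). RV v (\<lambda>t\<in>{1..v}. x (2*t-1)) (\<lambda>t\<in>{1..v}. x (2*t))}" for v
    unfolding Vset_def RV_def ph_def
    by (intro Collect_cong conj_cong refl all_cong imp_cong arg_cong[where f="\<lambda>z. z = 0"] sum.cong) auto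
  have Vcount: "card (Vset m n d e s v :: (nat \<Rightarrow> 'a) set) = card (Vg ph s {1..v})" for v
  proof -
    have "Vg ph s {1..v} = {(a,b). a \<in> PiE {1..v} (\<lambda>_. UNIV) \<and> b \<in> PiE {1..v} (\<lambda>_. UNIV) \<and> RV v a b}"
      unfolding Vg_def RV_def by simp
    then show ?thesis using card_transfer[of v "RV v"] Vrep[of v] by simp
  qed
  have Zeq: "H \<subseteq> Zset e u x \<longleftrightarrow> (\<forall>l<i. (\<Sum>t\<in>{1..u}. B l t * x (2*t)) = 0)" for x :: "nat \<Rightarrow> 'a"
  proof
    assume "H \<subseteq> Zset e u x"
    then show "\<forall>l<i. (\<Sum>t\<in>{1..u}. B l t * x (2*t)) = 0" using Bin by (auto simp: Zset_def)
  next
    assume z: "\<forall>l<i. (\<Sum>t\<in>{1..u}. B l t * x (2*t)) = 0"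
    show "H \<subseteq> Zset e u x"
    proof
      fix h assume hH: "h \<in> H"
      then obtain a where ha: "\<forall>t\<in>{1..u}. h t = (\<Sum>l<i. a l * B l t)" using Bspan by blast
      have "(\<Sum>t\<in>{1..u}. h t * x (2*t)) = (\<Sum>t\<in>{1..u}. \<Sum>l<i. a l * (B l t * x (2*t)))"
        using ha by (simp add: sum_distrib_right mult.assoc)
      also have "\<dots> = (\<Sum>l<i. a l * (\<Sum>t\<in>{1..u}. B l t * x (2*t)))"
        by (subst sum.swap) (simp add: sum_distrib_left)
      also have "\<dots> = 0" using z by simp
      finally show "h \<in> Zset e u x" using hH HPi by (auto simp: Zset_def)
    qed
  qed
  have Wcount: "card (Wset m n d e s u H) = card (Wg ph s {1..u} B i)"
  proof -
    define R where "R = (\<lambda>(a::nat\<Rightarrow>'a) b. RV u a b \<and> (\<forall>l<i. (\<Sum>t\<in>{1..u}. B l t * b t) = 0))"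
    have s1: "(\<Sum>t\<in>{1..u}. B l t * (\<lambda>t\<in>{1..u}. x (2*t)) t) = (\<Sum>t\<in>{1..u}. B l t * x (2*t))" for l and x :: "nat \<Rightarrow> 'a"
      by (rule sum.cong) auto
    have "Wset m n d e s u H = {x \<in> PiE {1..2*u} (\<lambda>_. UNIV). R (\<lambda>t\<in>{1..u}. x (2*t-1)) (\<lambda>t\<in>{1..u}. x (2*t))}"
    proof (rule set_eqI)
      fix x :: "nat \<Rightarrow> 'a"
      show "x \<in> Wset m n d e s u H \<longleftrightarrow> x \<in> {x \<in> PiE {1..2*u} (\<lambda>_. UNIV). R (\<lambda>t\<in>{1..u}. x (2*t-1)) (\<lambda>t\<in>{1..u}. x (2*t))}"
        unfolding Wset_def R_def s1 using Vrep[of u] Zeq[of x] by auto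
    qed
    moreover have "Wg ph s {1..u} B i = {(a,b). a \<in> PiE {1..u} (\<lambda>_. UNIV) \<and> b \<in> PiE {1..u} (\<lambda>_. UNIV) \<and> R a b}"
      unfolding Wg_def Vg_def R_def RV_def by auto
    ultimately show ?thesis using card_transfer[of u R] by simp
  qed
  have ind: "\<forall>c. (\<forall>l<i. c l \<in> K) \<longrightarrow> (\<forall>t\<in>{1..u}. (\<Sum>l<i. c l * B l t) = 0) \<longrightarrow> (\<forall>l<i. c l = 0)"
    using Bind by (simp add: K_def)
  have "card (Wg ph s {1..u} B i) = card (UNIV::'a set) ^ i * card (Vg ph s {1..card {1..u} - i})"
    by (rule main_count[OF hf subK _ BK ind]) simp
  then show ?thesis using Wcount Vcount[of "u - i"] assms(9) by (simp add: power_mult)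
qed

end
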